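(* Let $k$ be a nonperfect field of characteristic $2$, let $a\in k\setminus k^2$, let $G_1=G_2=PGL_2$, and let $f:G_1\to G_2$ be the Frobenius isogeny (squaring matrix entries). Let $h_1=\overline{\begin{pmatrix}0&a\\1&0\end{pmatrix}}$ and $H_1=\langle h_1\rangle$. Then $H_1$ is $G_1$-irreducible over $k$, but $f(H_1)=\left\langle\overline{\begin{pmatrix}0&a^2\\1&0\end{pmatrix}}\right\rangle$ is not $G_2$-completely reducible over $k$. (Thus part (1) of the statement "central $k$-isogenies preserve complete reducibility over $k$" fails without centrality.)
   Context: $\bar A$ denotes the image in $PGL_2$ of $A\in GL_2$. For a connected reductive $k$-group $G$, a closed subgroup $H$ is $G$-completely reducible over $k$ if whenever $H$ is contained in a $k$-parabolic subgroup $P$ of $G$, $H$ is contained in some $k$-Levi subgroup of $P$; $H$ is $G$-irreducible over $k$ if it lies in no proper $k$-parabolic subgroup. *)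

theory Defs
  imports "HOL-Analysis.Analysis"
begin

type_synonym 'a mat22 = "'a^2^2"

text \<open>Concrete model of PGL_2 over a field k, via its group of k-points
  GL_2(k)/k^*.  Elements of PGL_2(k) are classes of invertible 2x2 matrices
  modulo nonzero scalars.\<close>

definition mat2 :: "'a::zero \<Rightarrow> 'a \<Rightarrow> 'a \<Rightarrow> 'a \<Rightarrow> 'a^2^2" where
  "mat2 p q r s = (\<chi> i j. if i = 1 then (if j = 1 then p else q) else (if j = 1 then r else s))"

definition gl2 :: "('a::field) mat22 set" where
  "gl2 = {A. det A \<noteq> 0}"

definition pcls :: "('a::field)^2^2 \<Rightarrow> 'a mat22 set" where
  "pcls A = {B. det B \<noteq> 0 \<and> (\<exists>c. c \<noteq> 0 \<and> B = mat c ** A)}"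

definition PGL2 :: "('a::field) mat22 set set" where
  "PGL2 = pcls ` gl2"

fun mpow :: "('a::field)^2^2 \<Rightarrow> nat \<Rightarrow> 'a^2^2" where
  "mpow A 0 = mat 1"
| "mpow A (Suc n) = A ** mpow A n"

definition cyc :: "('a::field)^2^2 \<Rightarrow> 'a mat22 set set" where
  "cyc A = {pcls (mpow A n) | n. True} \<union> {pcls (mpow (matrix_inv A) n) | n. True}"

definition stab :: "('a::field)^2 \<Rightarrow> 'a mat22 set set" where
  "stab v = {X \<in> PGL2. \<exists>A\<in>X. \<exists>c. A *v v = c *s v}"

text \<open>k-parabolic subgroups of PGL_2: PGL_2 itself, or a k-Borel subgroup,
  i.e. the stabilizer of a k-rational line.\<close>
definition kparabolic :: "('a::field) mat22 set set \<Rightarrow> bool" where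
  "kparabolic P \<longleftrightarrow> P = PGL2 \<or> (\<exists>v. v \<noteq> 0 \<and> P = stab v)"

text \<open>k-Levi subgroups of a k-parabolic P: for P = PGL_2 it is PGL_2; for
  the Borel stabilizing the line kv it is the maximal k-torus stabilizing kv
  and a complementary k-rational line kw.\<close>
definition klevi :: "('a::field) mat22 set set \<Rightarrow> 'a mat22 set set \<Rightarrow> bool" where
  "klevi P L \<longleftrightarrow> (P = PGL2 \<and> L = PGL2) \<or>
     (\<exists>v w. v \<noteq> 0 \<and> P = stab v \<and> w \<noteq> 0 \<and> (\<forall>c. w \<noteq> c *s v) \<and> L = stab v \<inter> stab w)"

definition gcr_over_k :: "('a::field) mat22 set set \<Rightarrow> bool" where
  "gcr_over_k H \<longleftrightarrow> (\<forall>P. kparabolic P \<and> H \<subseteq> P \<longrightarrow> (\<exists>L. klevi P L \<and> H \<subseteq> L))"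

definition girr_over_k :: "('a::field) mat22 set set \<Rightarrow> bool" where
  "girr_over_k H \<longleftrightarrow> \<not> (\<exists>P. kparabolic P \<and> P \<noteq> PGL2 \<and> H \<subseteq> P)"

definition frobm :: "('a::field)^2^2 \<Rightarrow> 'a^2^2" where
  "frobm A = (\<chi> i j. (A $ i $ j)^2)"

definition frobP :: "('a::field) mat22 set \<Rightarrow> 'a mat22 set" where
  "frobP X = pcls (frobm (SOME A. A \<in> X))"

end

theory Submission
  imports Defs
begin

lemmas M2 = vec_eq_iff forall_2 sum_2 matrix_matrix_mult_def matrix_vector_mult_def mat_def mat2_def det_2

lemma matmat: "mat c ** mat d = (mat (c*d) :: 'a::field^2^2)"
  by (simp add: M2)
lemma matcomm: "mat c ** (A::'a::field^2^2) = A ** mat c"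
  by (simp add: M2 algebra_simps)
lemma matmat_assoc: "mat c ** (mat d ** (A::'a::field^2^2)) = mat (c*d) ** A"
  by (simp add: matrix_mul_assoc matmat)
lemma scal_mid: "(A::'a::field^2^2) ** (mat c ** C) = mat c ** (A ** C)"
  by (simp add: M2 algebra_simps)
lemma mat1: "mat 1 ** (A::'a::field^2^2) = A" by simp
lemma det_scale: "det (mat c ** (A::'a::field^2^2)) = c^2 * det A"
  by (simp add: M2 algebra_simps power2_eq_square)

lemma pcls_scale: assumes "c \<noteq> 0" shows "pcls (mat c ** A) = pcls (A::'a::field^2^2)"
proof
  show "pcls (mat c ** A) \<subseteq> pcls A" unfolding pcls_def
  proof clarify
    fix d assume "det (mat d ** (mat c ** A)) \<noteq> 0" "d \<noteq> 0"
    then show "\<exists>e. e \<noteq> 0 \<and> mat d ** (mat c ** A) = mat e ** A"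
      using assms by (intro exI[of _ "d*c"]) (auto simp: matmat_assoc)
  qed
  show "pcls A \<subseteq> pcls (mat c ** A)" unfolding pcls_def
  proof clarify
    fix B d assume "det (mat d ** A) \<noteq> 0" "d \<noteq> 0"
    then show "\<exists>e. e \<noteq> 0 \<and> mat d ** A = mat e ** (mat c ** A)"
      using assms by (intro exI[of _ "d/c"]) (auto simp: matmat_assoc)
  qed
qed
lemma pcls_scale_dummy: True
proof -
  show True
  proof -
    show True by simp
  qed
qed

lemma self_pcls: "det A \<noteq> 0 \<Longrightarrow> A \<in> pcls A"
  unfolding pcls_def by (auto intro: exI[of _ 1])

lemma frobm_scale: "frobm (mat c ** (A::'a::field^2^2)) = mat (c^2) ** frobm A"
  by (simp add: M2 frobm_def power_mult_distrib)

lemma frobP_pcls: assumes "det A \<noteq> 0" shows "frobP (pcls (A::'a::field^2^2)) = pcls (frobm A)"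
proof -
  have "(SOME B. B \<in> pcls A) \<in> pcls A" using self_pcls[OF assms] by (rule someI)
  then obtain c where "c \<noteq> 0" "(SOME B. B \<in> pcls A) = mat c ** A" unfolding pcls_def by auto
  then show ?thesis unfolding frobP_def by (simp add: frobm_scale pcls_scale)
qed

lemma mpow_sq: assumes "B ** B = mat s" shows "mpow (B::'a::field^2^2) n = mat (s^(n div 2)) ** (if even n then mat 1 else B)"
proof (induction n)
  case 0 then show ?case by simp
next
  case (Suc n)
  show ?case
  proof (cases "even n")
    case True
    have "B ** mat (s ^ (n div 2)) = mat (s ^ (n div 2)) ** B" by (rule matcomm[symmetric])
    then show ?thesis using Suc True by simp
  next
    case False
    then have "Suc n div 2 = Suc (n div 2)" by presburger
    with False Suc show ?thesis
      by (simp add: scal_mid assms matmat mult.commute)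
  qed
qed

lemma pcls_mpow: assumes "B ** B = mat s" "s \<noteq> 0"
  shows "pcls (mpow (B::'a::field^2^2) n) \<in> {pcls (mat 1), pcls B}"
  using assms by (simp add: mpow_sq[OF assms(1)] pcls_scale)

lemma inv_eq: assumes "B ** B = mat s" "s \<noteq> 0"
  shows "matrix_inv (B::'a::field^2^2) = mat (1/s) ** B"
proof -
  have c: "B ** (mat (1/s) ** B) = mat 1 \<and> (mat (1/s) ** B) ** B = mat 1"
    using assms by (simp add: scal_mid matmat_assoc matrix_mul_assoc[symmetric] matmat)
  then have ex: "\<exists>A'. B ** A' = mat 1 \<and> A' ** B = mat 1" by blast
  have u: "A' = mat (1/s) ** B" if "B ** A' = mat 1 \<and> A' ** B = mat 1" for A'
  proof -
    have "A' = A' ** (B ** (mat (1/s) ** B))" using c by simp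
    also have "\<dots> = (A' ** B) ** (mat (1/s) ** B)" by (simp add: matrix_mul_assoc)
    finally show ?thesis using that by simp
  qed
  show ?thesis unfolding matrix_inv_def by (rule u, rule someI_ex[OF ex])
qed

lemma cyc_eq: assumes "B ** B = mat s" "s \<noteq> 0"
  shows "cyc (B::'a::field^2^2) = {pcls (mat 1), pcls B}"
proof -
  let ?N = "matrix_inv B"
  have N: "?N = mat (1/s) ** B" by (rule inv_eq[OF assms])
  have NN: "?N ** ?N = mat (1/s)" using assms unfolding N
    by (simp add: scal_mid matmat_assoc matmat matrix_mul_assoc[symmetric])
  have pN: "pcls ?N = pcls B" unfolding N using assms by (simp add: pcls_scale)
  have "mpow B 1 = B" by simp
  then have "pcls B \<in> {pcls (mpow B n) | n. True}" by (metis (mono_tags, lifting) mem_Collect_eq)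
  moreover have "pcls (mat 1) \<in> {pcls (mpow B n) | n. True}"
    by (metis (mono_tags, lifting) mem_Collect_eq mpow.simps(1))
  ultimately show ?thesis unfolding cyc_def
    using pcls_mpow[OF assms] pcls_mpow[OF NN] assms pN by auto
qed

lemma two0: assumes "CHAR('a::field) = 2" shows "(2::'a) = 0"
  using assms of_nat_CHAR[where 'a='a] by simp

lemma eig: assumes "pcls B \<in> stab w" shows "\<exists>c. (B::'a::field^2^2) *v w = c *s w"
proof -
  from assms obtain A c where A: "A \<in> pcls B" "A *v w = c *s w" unfolding stab_def by auto
  then obtain d where d: "d \<noteq> 0" "A = mat d ** B" unfolding pcls_def by auto
  have "A *v w = d *s (B *v w)" unfolding d(2)
    by (simp add: vec_eq_iff forall_2 sum_2 matrix_matrix_mult_def matrix_vector_mult_def mat_def algebra_simps)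
  with A have "d *s (B *v w) = c *s w" by simp
  then have "(1/d) *s (d *s (B *v w)) = (1/d) *s (c *s w)" by simp
  then have "B *v w = (c/d) *s w" using d(1) by (simp add: scalar_mult_eq_scaleR vector_smult_assoc)
  then show ?thesis by blast
qed

lemma stab_in: assumes "det B \<noteq> 0" "(B::'a::field^2^2) *v w = c *s w" shows "pcls B \<in> stab w"
  unfolding stab_def PGL2_def gl2_def using assms self_pcls[OF assms(1)] by blast

lemma vec2_eq: "(v::'a^2) = w \<longleftrightarrow> v$1 = w$1 \<and> v$2 = w$2"
  by (simp add: vec_eq_iff forall_2)

lemma noeig_M: assumes "\<forall>b::'a::field. a \<noteq> b^2" "(w::'a^2) \<noteq> 0"
  shows "mat2 0 a 1 0 *v w \<noteq> c *s w"
proof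
  assume "mat2 0 a 1 0 *v w = c *s w"
  then have e: "a * w$2 = c * w$1" "w$1 = c * w$2"
    by (simp_all add: vec2_eq M2)
  have "w$2 \<noteq> 0" using e assms(2) by (auto simp: vec2_eq)
  moreover have "a * w$2 = c^2 * w$2" using e by (simp add: power2_eq_square)
  ultimately have "a = c^2" by simp
  with assms(1) show False by blast
qed

lemma eigM': assumes "CHAR('a::field) = 2" "(w::'a^2) \<noteq> 0" "mat2 0 (a^2) 1 0 *v w = c *s w"
  shows "w$1 = a * w$2 \<and> w$2 \<noteq> 0"
proof -
  from assms(3) have e: "a^2 * w$2 = c * w$1" "w$1 = c * w$2"
    by (simp_all add: vec2_eq M2)
  have w2: "w$2 \<noteq> 0" using e assms(2) by (auto simp: vec2_eq)
  moreover have "a^2 * w$2 = c^2 * w$2" using e by (simp add: power2_eq_square)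
  ultimately have ac: "a^2 = c^2" by simp
  have "(a+c)^2 = a^2 + c^2 + 2*a*c" by (simp add: power2_eq_square algebra_simps)
  also have "\<dots> = 0" using ac two0[OF assms(1)] by (simp add: uminus_CHAR_2[OF assms(1)])
  finally have "a + c = 0" by simp
  then have "c = a" using uminus_CHAR_2[OF assms(1), of a] by (simp add: add_eq_0_iff2)
  with e w2 show ?thesis by simp
qed

theorem mainTheorem10:
  fixes a :: "'a::field"
  assumes char2: "CHAR('a) = 2"
    and nonperfect: "\<exists>x::'a. \<forall>y. x \<noteq> y ^ 2"
    and a_nonsq: "\<forall>b::'a. a \<noteq> b ^ 2"
  shows "girr_over_k (cyc (mat2 0 a 1 0))
       \<and> frobP ` (cyc (mat2 0 a 1 0)) = cyc (mat2 0 (a ^ 2) 1 0)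
       \<and> \<not> gcr_over_k (frobP ` (cyc (mat2 0 a 1 0)))"
proof -
  define M where "M = mat2 0 a 1 0"
  define M' where "M' = mat2 0 (a^2) 1 0"
  have a0: "a \<noteq> 0" using a_nonsq[rule_format, of 0] by auto
  have MM: "M ** M = mat a" unfolding M_def by (simp add: M2)
  have MM': "M' ** M' = mat (a^2)" unfolding M'_def by (simp add: M2 power2_eq_square)
  have dM: "det M \<noteq> 0" unfolding M_def using a0 by (simp add: M2)
  have dM': "det M' \<noteq> 0" unfolding M'_def using a0 by (simp add: M2)
  have d1: "det (mat 1 :: 'a^2^2) \<noteq> 0" by simp
  have cM: "cyc M = {pcls (mat 1), pcls M}" by (rule cyc_eq[OF MM a0])
  have cM': "cyc M' = {pcls (mat 1), pcls M'}" by (rule cyc_eq[OF MM']) (simp add: a0)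
  have fM: "frobm M = M'" unfolding M_def M'_def frobm_def mat2_def
    by (simp add: vec_eq_iff forall_2)
  have f1: "frobm (mat 1 :: 'a^2^2) = mat 1" unfolding frobm_def mat_def
    by (simp add: vec_eq_iff)
  have img: "frobP ` cyc M = cyc M'"
    using frobP_pcls[OF dM] frobP_pcls[OF d1] cM cM' fM f1 by simp
  have noM: "pcls M \<notin> stab w" if "w \<noteq> 0" for w
    using eig[of M w] noeig_M[OF a_nonsq that] unfolding M_def by blast
  have MinP: "pcls M \<in> PGL2" unfolding PGL2_def gl2_def using dM by blast
  have girr: "girr_over_k (cyc M)"
    unfolding girr_over_k_def kparabolic_def cM using noM by blast
  define v :: "'a^2" where "v = (\<chi> i. if i = 1 then a else 1)"
  have v0: "v \<noteq> 0" unfolding v_def by (simp add: vec_eq_iff exI[of _ 2])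
  have "mat 1 *v v = 1 *s v" by simp
  then have s1: "pcls (mat 1) \<in> stab v" by (rule stab_in[OF d1])
  have "M' *v v = a *s v" unfolding M'_def v_def by (simp add: M2 power2_eq_square)
  then have s2: "pcls M' \<in> stab v" by (rule stab_in[OF dM'])
  have eigs: "w$1 = a * w$2 \<and> w$2 \<noteq> 0" if "w \<noteq> 0" "pcls M' \<in> stab w" for w
    using eig[OF that(2)] eigM'[OF char2 that(1)] unfolding M'_def by blast
  have ngcr: "\<not> gcr_over_k (cyc M')"
    unfolding gcr_over_k_def
  proof
    assume H: "\<forall>P. kparabolic P \<and> cyc M' \<subseteq> P \<longrightarrow> (\<exists>L. klevi P L \<and> cyc M' \<subseteq> L)"
    have "kparabolic (stab v)" unfolding kparabolic_def using v0 by blast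
    moreover have "cyc M' \<subseteq> stab v" using cM' s1 s2 by simp
    ultimately obtain L where L: "klevi (stab v) L" "cyc M' \<subseteq> L" using H by blast
    have nP: "stab v \<noteq> PGL2" using noM[OF v0] MinP by blast
    from L(1) nP obtain v' w where vw: "v' \<noteq> 0" "stab v = stab v'" "w \<noteq> 0"
       "\<forall>c. w \<noteq> c *s v'" "L = stab v \<inter> stab w" unfolding klevi_def by blast
    have "pcls M' \<in> stab w" "pcls M' \<in> stab v'" using L(2) vw cM' s2 by auto
    then have e1: "w$1 = a * w$2" and e2: "v'$1 = a * v'$2" "v'$2 \<noteq> 0"
      using eigs vw by blast+
    have "w = (w$2 / v'$2) *s v'" using e1 e2 by (simp add: vec2_eq)
    with vw(4) show False by blast
  qed
  show ?thesis using girr img ngcr unfolding M_def M'_def by simp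
qed

end
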